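(* Let $g_{ij}(\eta)$ be $\mathcal G_{i,j-1}$-measurable random variables ($i,j\ge1$). Then, whenever all the integrals exist, $$E_\eta[g_{ij}(\eta)Z_{ij}(\theta)I_{ij}^{cen}\mid\mathcal G_{i,j-1}]=-E_\eta[g_{ij}(\eta)Z_{ij}(\theta)I_{ij}^{obs}\mid\mathcal G_{i,j-1}],$$ $$E_\eta[g_{ij}(\eta)(Z_{ij}^2(\theta)-\sigma^2)I_{ij}^{cen}\mid\mathcal G_{i,j-1}]=-E_\eta[g_{ij}(\eta)(Z_{ij}^2(\theta)-\sigma^2)I_{ij}^{obs}\mid\mathcal G_{i,j-1}].$$
   Context: Probability measures $P_\eta$, $\eta=(\theta^T,\sigma^2)^T\in K\subset\mathbb R^{p+1}$, on a measurable space; $E_\eta$ is expectation under $P_\eta$. For each subject $i\ge1$: event times $0=S_{i0}<S_{i1}<\cdots$, censoring time $0<C_i<\infty$, random covariates $x_{ij}$. $\mathcal F_{ij}=\sigma\{S_{il}\ (0\le l\le j);x_{il}\ (1\le l\le j+1)\}$, $\mathcal G_{ij}=\sigma\{\mathcal F_{ij},\{S_{ik}\le C_i\},\{S_{ik}=C_i\}\ (1\le k\le j)\}$ for $j\ge1$, $\mathcal G_{i0}=\mathcal F_{i0}$. Gap times $Y_{ij}=S_{ij}-S_{i,j-1}$ have finite second moments and satisfy $E_\theta[Y_{ij}\mid\mathcal F_{i,j-1}]=\mu_{ij}(\theta)$, $\mathrm{var}_\eta[Y_{ij}\mid\mathcal F_{i,j-1}]=\sigma^2V_{ij}^2(\theta)$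 with known $\mu_{ij}(\theta)$, $V_{ij}(\theta)>0$ that are $\mathcal F_{i,j-1}$-measurable. Standing assumption (A): $E_\theta[Y_{ij}\mid\mathcal G_{i,j-1}]=E_\theta[Y_{ij}\mid\mathcal F_{i,j-1}]$ and $\mathrm{var}_\eta[Y_{ij}\mid\mathcal G_{i,j-1}]=\mathrm{var}_\eta[Y_{ij}\mid\mathcal F_{i,j-1}]$. $Z_{ij}(\theta)=(Y_{ij}-\mu_{ij}(\theta))/V_{ij}(\theta)$. Indicators: $I_{ij}^{obs}=I\{S_{ij}\le C_i\}$, $I_{ij}^{cen}=I\{S_{i,j-1}<C_i<S_{ij}\}$. *)

theory Defs
  imports "HOL-Probability.Probability"
begin

text \<open>Generators of F_{ij} = sigma{S_{il} (0<=l<=j); x_{il} (1<=l<=j+1)}.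
  S i l : event times, x i l : covariates (values in the measurable space Xsp).\<close>
definition F_gen :: "'a measure \<Rightarrow> (nat \<Rightarrow> nat \<Rightarrow> 'a \<Rightarrow> real) \<Rightarrow> (nat \<Rightarrow> nat \<Rightarrow> 'a \<Rightarrow> 'c)
    \<Rightarrow> 'c measure \<Rightarrow> nat \<Rightarrow> nat \<Rightarrow> 'a set set" where
  "F_gen \<Omega> S x Xsp i j =
     {S i l -` B \<inter> space \<Omega> | l B. l \<le> j \<and> B \<in> sets borel}
   \<union> {x i l -` B \<inter> space \<Omega> | l B. 1 \<le> l \<and> l \<le> Suc j \<and> B \<in> sets Xsp}"

definition F_alg :: "'a measure \<Rightarrow> (nat \<Rightarrow> nat \<Rightarrow> 'a \<Rightarrow> real) \<Rightarrow> (nat \<Rightarrow> nat \<Rightarrow> 'a \<Rightarrow> 'c)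
    \<Rightarrow> 'c measure \<Rightarrow> nat \<Rightarrow> nat \<Rightarrow> 'a measure" where
  "F_alg \<Omega> S x Xsp i j = sigma (space \<Omega>) (F_gen \<Omega> S x Xsp i j)"

text \<open>G_{ij} = sigma{F_{ij}, {S_{ik} <= C_i}, {S_{ik} = C_i} (1<=k<=j)}; for j = 0 the
  extra generators are absent, so G_{i0} = F_{i0}.\<close>
definition G_alg :: "'a measure \<Rightarrow> (nat \<Rightarrow> nat \<Rightarrow> 'a \<Rightarrow> real) \<Rightarrow> (nat \<Rightarrow> nat \<Rightarrow> 'a \<Rightarrow> 'c)
    \<Rightarrow> 'c measure \<Rightarrow> (nat \<Rightarrow> 'a \<Rightarrow> real) \<Rightarrow> nat \<Rightarrow> nat \<Rightarrow> 'a measure" where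
  "G_alg \<Omega> S x Xsp C i j = sigma (space \<Omega>)
     (F_gen \<Omega> S x Xsp i j
      \<union> {{\<omega> \<in> space \<Omega>. S i k \<omega> \<le> C i \<omega>} | k. 1 \<le> k \<and> k \<le> j}
      \<union> {{\<omega> \<in> space \<Omega>. S i k \<omega> = C i \<omega>} | k. 1 \<le> k \<and> k \<le> j})"

definition gap :: "(nat \<Rightarrow> nat \<Rightarrow> 'a \<Rightarrow> real) \<Rightarrow> nat \<Rightarrow> nat \<Rightarrow> 'a \<Rightarrow> real" where
  "gap S i j \<omega> = S i j \<omega> - S i (j - 1) \<omega>"

definition Zres :: "(nat \<Rightarrow> nat \<Rightarrow> 'a \<Rightarrow> real) \<Rightarrow> (nat \<Rightarrow> nat \<Rightarrow> 't \<Rightarrow> 'a \<Rightarrow> real)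
    \<Rightarrow> (nat \<Rightarrow> nat \<Rightarrow> 't \<Rightarrow> 'a \<Rightarrow> real) \<Rightarrow> nat \<Rightarrow> nat \<Rightarrow> 't \<Rightarrow> 'a \<Rightarrow> real" where
  "Zres S \<mu> V i j \<theta> \<omega> = (gap S i j \<omega> - \<mu> i j \<theta> \<omega>) / V i j \<theta> \<omega>"

definition Iobs :: "(nat \<Rightarrow> nat \<Rightarrow> 'a \<Rightarrow> real) \<Rightarrow> (nat \<Rightarrow> 'a \<Rightarrow> real) \<Rightarrow> nat \<Rightarrow> nat \<Rightarrow> 'a \<Rightarrow> real" where
  "Iobs S C i j \<omega> = (if S i j \<omega> \<le> C i \<omega> then 1 else 0)"

definition Icen :: "(nat \<Rightarrow> nat \<Rightarrow> 'a \<Rightarrow> real) \<Rightarrow> (nat \<Rightarrow> 'a \<Rightarrow> real) \<Rightarrow> nat \<Rightarrow> nat \<Rightarrow> 'a \<Rightarrow> real" where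
  "Icen S C i j \<omega> = (if S i (j - 1) \<omega> < C i \<omega> \<and> C i \<omega> < S i j \<omega> then 1 else 0)"

end

theory Submission
  imports Defs
begin

theorem lemma2p1:
  fixes \<Omega> :: "'a measure"
    and P :: "((real ^ 'p::finite) \<times> real) \<Rightarrow> 'a measure"
    and K :: "((real ^ 'p) \<times> real) set"
    and S :: "nat \<Rightarrow> nat \<Rightarrow> 'a \<Rightarrow> real"
    and C :: "nat \<Rightarrow> 'a \<Rightarrow> real"
    and x :: "nat \<Rightarrow> nat \<Rightarrow> 'a \<Rightarrow> 'c"
    and Xsp :: "'c measure"
    and \<mu> V :: "nat \<Rightarrow> nat \<Rightarrow> real ^ 'p \<Rightarrow> 'a \<Rightarrow> real"
    and \<eta> :: "(real ^ 'p) \<times> real"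
    and g :: "'a \<Rightarrow> real"
    and i j :: nat
  assumes prob: "\<And>\<eta>'. \<eta>' \<in> K \<Longrightarrow> prob_space (P \<eta>')"
    and sets_P: "\<And>\<eta>'. \<eta>' \<in> K \<Longrightarrow> sets (P \<eta>') = sets \<Omega>"
    and S_meas: "\<And>i l. S i l \<in> borel_measurable \<Omega>"
    and x_meas: "\<And>i l. x i l \<in> measurable \<Omega> Xsp"
    and C_meas: "\<And>i. C i \<in> borel_measurable \<Omega>"
    and S0: "\<And>i \<omega>. \<omega> \<in> space \<Omega> \<Longrightarrow> S i 0 \<omega> = 0"
    and S_incr: "\<And>i l \<omega>. \<omega> \<in> space \<Omega> \<Longrightarrow> S i l \<omega> < S i (Suc l) \<omega>"
    and C_pos: "\<And>i \<omega>. \<omega> \<in> space \<Omega> \<Longrightarrow> 0 < C i \<omega>"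
    and Y_sq: "\<And>\<eta>' i j. \<eta>' \<in> K \<Longrightarrow> 1 \<le> i \<Longrightarrow> 1 \<le> j \<Longrightarrow>
                 integrable (P \<eta>') (\<lambda>\<omega>. (gap S i j \<omega>)\<^sup>2)"
    and \<mu>_meas: "\<And>\<eta>' i j. \<eta>' \<in> K \<Longrightarrow> 1 \<le> i \<Longrightarrow> 1 \<le> j \<Longrightarrow>
                 \<mu> i j (fst \<eta>') \<in> borel_measurable (F_alg \<Omega> S x Xsp i (j - 1))"
    and V_meas: "\<And>\<eta>' i j. \<eta>' \<in> K \<Longrightarrow> 1 \<le> i \<Longrightarrow> 1 \<le> j \<Longrightarrow>
                 V i j (fst \<eta>') \<in> borel_measurable (F_alg \<Omega> S x Xsp i (j - 1))"
    and V_pos: "\<And>\<eta>' i j \<omega>. \<eta>' \<in> K \<Longrightarrow> 1 \<le> i \<Longrightarrow> 1 \<le> j \<Longrightarrow> \<omega> \<in> space \<Omega> \<Longrightarrow>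
                 0 < V i j (fst \<eta>') \<omega>"
    and mean_F: "\<And>\<eta>' i j. \<eta>' \<in> K \<Longrightarrow> 1 \<le> i \<Longrightarrow> 1 \<le> j \<Longrightarrow>
                 AE \<omega> in P \<eta>'. real_cond_exp (P \<eta>') (F_alg \<Omega> S x Xsp i (j - 1)) (gap S i j) \<omega>
                                 = \<mu> i j (fst \<eta>') \<omega>"
    and var_F: "\<And>\<eta>' i j. \<eta>' \<in> K \<Longrightarrow> 1 \<le> i \<Longrightarrow> 1 \<le> j \<Longrightarrow>
                 AE \<omega> in P \<eta>'. real_cond_exp (P \<eta>') (F_alg \<Omega> S x Xsp i (j - 1))
                     (\<lambda>\<omega>. (gap S i j \<omega> - \<mu> i j (fst \<eta>') \<omega>)\<^sup>2) \<omega>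
                   = snd \<eta>' * (V i j (fst \<eta>') \<omega>)\<^sup>2"
    and mean_G: "\<And>\<eta>' i j. \<eta>' \<in> K \<Longrightarrow> 1 \<le> i \<Longrightarrow> 1 \<le> j \<Longrightarrow>
                 AE \<omega> in P \<eta>'. real_cond_exp (P \<eta>') (G_alg \<Omega> S x Xsp C i (j - 1)) (gap S i j) \<omega>
                                 = real_cond_exp (P \<eta>') (F_alg \<Omega> S x Xsp i (j - 1)) (gap S i j) \<omega>"
    and var_G: "\<And>\<eta>' i j. \<eta>' \<in> K \<Longrightarrow> 1 \<le> i \<Longrightarrow> 1 \<le> j \<Longrightarrow>
                 AE \<omega> in P \<eta>'.
                   real_cond_exp (P \<eta>') (G_alg \<Omega> S x Xsp C i (j - 1))
                     (\<lambda>\<omega>. (gap S i j \<omega>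
                        - real_cond_exp (P \<eta>') (G_alg \<Omega> S x Xsp C i (j - 1)) (gap S i j) \<omega>)\<^sup>2) \<omega>
                 = real_cond_exp (P \<eta>') (F_alg \<Omega> S x Xsp i (j - 1))
                     (\<lambda>\<omega>. (gap S i j \<omega>
                        - real_cond_exp (P \<eta>') (F_alg \<Omega> S x Xsp i (j - 1)) (gap S i j) \<omega>)\<^sup>2) \<omega>"
    and \<eta>K: "\<eta> \<in> K"
    and ij: "1 \<le> i" "1 \<le> j"
    and g_meas: "g \<in> borel_measurable (G_alg \<Omega> S x Xsp C i (j - 1))"
    and int1: "integrable (P \<eta>) (\<lambda>\<omega>. g \<omega> * Zres S \<mu> V i j (fst \<eta>) \<omega> * Icen S C i j \<omega>)"
    and int2: "integrable (P \<eta>) (\<lambda>\<omega>. g \<omega> * Zres S \<mu> V i j (fst \<eta>) \<omega> * Iobs S C i j \<omega>)"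
    and int3: "integrable (P \<eta>)
                 (\<lambda>\<omega>. g \<omega> * ((Zres S \<mu> V i j (fst \<eta>) \<omega>)\<^sup>2 - snd \<eta>) * Icen S C i j \<omega>)"
    and int4: "integrable (P \<eta>)
                 (\<lambda>\<omega>. g \<omega> * ((Zres S \<mu> V i j (fst \<eta>) \<omega>)\<^sup>2 - snd \<eta>) * Iobs S C i j \<omega>)"
  shows "(AE \<omega> in P \<eta>.
            real_cond_exp (P \<eta>) (G_alg \<Omega> S x Xsp C i (j - 1))
              (\<lambda>\<omega>. g \<omega> * Zres S \<mu> V i j (fst \<eta>) \<omega> * Icen S C i j \<omega>) \<omega>
          = - real_cond_exp (P \<eta>) (G_alg \<Omega> S x Xsp C i (j - 1))
              (\<lambda>\<omega>. g \<omega> * Zres S \<mu> V i j (fst \<eta>) \<omega> * Iobs S C i j \<omega>) \<omega>)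
       \<and> (AE \<omega> in P \<eta>.
            real_cond_exp (P \<eta>) (G_alg \<Omega> S x Xsp C i (j - 1))
              (\<lambda>\<omega>. g \<omega> * ((Zres S \<mu> V i j (fst \<eta>) \<omega>)\<^sup>2 - snd \<eta>) * Icen S C i j \<omega>) \<omega>
          = - real_cond_exp (P \<eta>) (G_alg \<Omega> S x Xsp C i (j - 1))
              (\<lambda>\<omega>. g \<omega> * ((Zres S \<mu> V i j (fst \<eta>) \<omega>)\<^sup>2 - snd \<eta>) * Iobs S C i j \<omega>) \<omega>)"
proof -
  let ?M = "P \<eta>"
  let ?F = "F_alg \<Omega> S x Xsp i (j - 1)"
  let ?G = "G_alg \<Omega> S x Xsp C i (j - 1)"
  let ?Y = "gap S i j"
  let ?m = "\<mu> i j (fst \<eta>)"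
  let ?v = "V i j (fst \<eta>)"
  let ?s = "snd \<eta>"
  let ?h = "\<lambda>\<omega>. if S i (j - 1) \<omega> < C i \<omega> then 1 else (0::real)"
  interpret M: prob_space ?M using prob[OF \<eta>K] .
  have setsM: "sets ?M = sets \<Omega>" using sets_P[OF \<eta>K] .
  have spM: "space ?M = space \<Omega>" using sets_eq_imp_space_eq[OF setsM] .
  have measM: "f \<in> borel_measurable ?M" if "f \<in> borel_measurable \<Omega>" for f :: "'a \<Rightarrow> real"
    using that measurable_cong_sets[OF setsM refl] by blast
  have Fgen_sub: "F_gen \<Omega> S x Xsp i (j - 1) \<subseteq> sets \<Omega>"
    unfolding F_gen_def using S_meas x_meas by (auto simp: measurable_sets)
  have Ggen_sub: "F_gen \<Omega> S x Xsp i (j - 1)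
      \<union> {{\<omega> \<in> space \<Omega>. S i k \<omega> \<le> C i \<omega>} | k. 1 \<le> k \<and> k \<le> j - 1}
      \<union> {{\<omega> \<in> space \<Omega>. S i k \<omega> = C i \<omega>} | k. 1 \<le> k \<and> k \<le> j - 1} \<subseteq> sets \<Omega>"
    using Fgen_sub S_meas C_meas by auto
  have spF: "space ?F = space \<Omega>" unfolding F_alg_def by (simp add: space_measure_of_conv)
  have spG: "space ?G = space \<Omega>" unfolding G_alg_def by (simp add: space_measure_of_conv)
  have Fgen_pow: "F_gen \<Omega> S x Xsp i (j - 1) \<subseteq> Pow (space \<Omega>)"
    using Fgen_sub sets.sets_into_space by blast
  have Ggen_pow: "F_gen \<Omega> S x Xsp i (j - 1)
      \<union> {{\<omega> \<in> space \<Omega>. S i k \<omega> \<le> C i \<omega>} | k. 1 \<le> k \<and> k \<le> j - 1}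
      \<union> {{\<omega> \<in> space \<Omega>. S i k \<omega> = C i \<omega>} | k. 1 \<le> k \<and> k \<le> j - 1} \<subseteq> Pow (space \<Omega>)"
    using Ggen_sub sets.sets_into_space by blast
  have setsG: "sets ?G = sigma_sets (space \<Omega>) (F_gen \<Omega> S x Xsp i (j - 1)
      \<union> {{\<omega> \<in> space \<Omega>. S i k \<omega> \<le> C i \<omega>} | k. 1 \<le> k \<and> k \<le> j - 1}
      \<union> {{\<omega> \<in> space \<Omega>. S i k \<omega> = C i \<omega>} | k. 1 \<le> k \<and> k \<le> j - 1})"
    unfolding G_alg_def using Ggen_pow by (simp add: sets_measure_of)
  have FG: "sets ?F \<subseteq> sets ?G"
    unfolding F_alg_def
    by (subst sigma_le_sets[OF Fgen_pow], unfold setsG, intro conjI subsetI sigma_sets_top; rule sigma_sets.Basic; blast)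
  have GM: "sets ?G \<subseteq> sets ?M"
    unfolding G_alg_def setsM by (subst sigma_le_sets[OF Ggen_pow]) (use Ggen_sub in auto)
  have subG: "subalgebra ?M ?G" unfolding subalgebra_def using GM spG spM by simp
  have subF: "subalgebra ?M ?F" unfolding subalgebra_def using GM FG spF spM by auto
  have subGF: "subalgebra ?G ?F" unfolding subalgebra_def using FG spF spG by auto
  interpret sG: finite_measure_subalgebra ?M ?G by unfold_locales (rule subG)
  interpret sF: finite_measure_subalgebra ?M ?F by unfold_locales (rule subF)
  have FtoG: "f \<in> borel_measurable ?G" if "f \<in> borel_measurable ?F" for f :: "'a \<Rightarrow> real"
    using measurable_from_subalg[OF subGF that] .
  have GtoM: "f \<in> borel_measurable ?M" if "f \<in> borel_measurable ?G" for f :: "'a \<Rightarrow> real"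
    using measurable_from_subalg[OF subG that] .
  have mF: "?m \<in> borel_measurable ?F" using \<mu>_meas[OF \<eta>K ij] .
  have vF: "?v \<in> borel_measurable ?F" using V_meas[OF \<eta>K ij] .
  have mG[measurable]: "?m \<in> borel_measurable ?G" using FtoG[OF mF] .
  have vG[measurable]: "?v \<in> borel_measurable ?G" using FtoG[OF vF] .
  have gG[measurable]: "g \<in> borel_measurable ?G" using g_meas .
  have mM[measurable]: "?m \<in> borel_measurable ?M" using GtoM[OF mG] .
  have vM[measurable]: "?v \<in> borel_measurable ?M" using GtoM[OF vG] .
  have gM[measurable]: "g \<in> borel_measurable ?M" using GtoM[OF gG] .
  have YM[measurable]: "?Y \<in> borel_measurable ?M"
    unfolding gap_def by (rule measM) (use S_meas in measurable)
  have Y2: "integrable ?M (\<lambda>\<omega>. (?Y \<omega>)\<^sup>2)" using Y_sq[OF \<eta>K ij] .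
  have Yint: "integrable ?M ?Y" by (rule M.square_integrable_imp_integrable[OF YM Y2])
  have hG[measurable]: "?h \<in> borel_measurable ?G"
  proof -
    have A: "{\<omega> \<in> space ?G. S i (j - 1) \<omega> < C i \<omega>} \<in> sets ?G"
    proof (cases "j - 1 = 0")
      case True
      have "{\<omega> \<in> space ?G. S i (j - 1) \<omega> < C i \<omega>} = space ?G"
        using True S0 C_pos spG by auto
      then show ?thesis by simp
    next
      case False
      have eq: "{\<omega> \<in> space ?G. S i (j - 1) \<omega> < C i \<omega>} =
          {\<omega> \<in> space \<Omega>. S i (j - 1) \<omega> \<le> C i \<omega>} - {\<omega> \<in> space \<Omega>. S i (j - 1) \<omega> = C i \<omega>}"
        using spG by auto
      have m1: "{\<omega> \<in> space \<Omega>. S i (j - 1) \<omega> \<le> C i \<omega>} \<in> {{\<omega> \<in> space \<Omega>. S i k \<omega> \<le> C i \<omega>} | k. 1 \<le> k \<and> k \<le> j - 1}"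
        by (intro CollectI exI[of _ "j - 1"]) (use False in simp)
      have m2: "{\<omega> \<in> space \<Omega>. S i (j - 1) \<omega> = C i \<omega>} \<in> {{\<omega> \<in> space \<Omega>. S i k \<omega> = C i \<omega>} | k. 1 \<le> k \<and> k \<le> j - 1}"
        by (intro CollectI exI[of _ "j - 1"]) (use False in simp)
      have s1: "{\<omega> \<in> space \<Omega>. S i (j - 1) \<omega> \<le> C i \<omega>} \<in> sets ?G"
        unfolding setsG by (rule sigma_sets.Basic, rule UnI1, rule UnI2, rule m1)
      have s2: "{\<omega> \<in> space \<Omega>. S i (j - 1) \<omega> = C i \<omega>} \<in> sets ?G"
        unfolding setsG by (rule sigma_sets.Basic, rule UnI2, rule m2)
      show ?thesis unfolding eq by (rule sets.Diff[OF s1 s2])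
    qed
    show ?thesis by (rule measurable_If[OF _ _ A]; simp)
  qed
  have hM[measurable]: "?h \<in> borel_measurable ?M" using GtoM[OF hG] .
  have sumI: "Icen S C i j \<omega> + Iobs S C i j \<omega> = ?h \<omega>" if "\<omega> \<in> space ?M" for \<omega>
  proof -
    have "S i (j - 1) \<omega> < S i j \<omega>" using S_incr[of \<omega> i "j - 1"] that spM ij by simp
    then show ?thesis unfolding Icen_def Iobs_def by auto
  qed
  have EYF: "AE \<omega> in ?M. real_cond_exp ?M ?F ?Y \<omega> = ?m \<omega>" using mean_F[OF \<eta>K ij] .
  have EYGF: "AE \<omega> in ?M. real_cond_exp ?M ?G ?Y \<omega> = real_cond_exp ?M ?F ?Y \<omega>"
    using mean_G[OF \<eta>K ij] .
  have EYG: "AE \<omega> in ?M. real_cond_exp ?M ?G ?Y \<omega> = ?m \<omega>" using EYF EYGF by eventually_elim simp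
  have mint: "integrable ?M ?m"
    using integrable_cong_AE[OF borel_measurable_cond_exp2 mM EYF] sF.real_cond_exp_int(1)[OF Yint] by simp
  have m2c: "integrable ?M (\<lambda>\<omega>. (real_cond_exp ?M ?F ?Y \<omega>)\<^sup>2)"
    by (rule sF.integrable_convex_cond_exp[where I=UNIV]) (use Yint Y2 convex_power_even[of 2] in auto)
  have m2int: "integrable ?M (\<lambda>\<omega>. (?m \<omega>)\<^sup>2)"
  proof -
    have "AE \<omega> in ?M. (real_cond_exp ?M ?F ?Y \<omega>)\<^sup>2 = (?m \<omega>)\<^sup>2" using EYF by eventually_elim simp
    then show ?thesis using integrable_cong_AE[of "\<lambda>\<omega>. (real_cond_exp ?M ?F ?Y \<omega>)\<^sup>2" ?M "\<lambda>\<omega>. (?m \<omega>)\<^sup>2"] m2c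
      by simp
  qed
  have Dint: "integrable ?M (\<lambda>\<omega>. (?Y \<omega> - ?m \<omega>)\<^sup>2)"
  proof (rule Bochner_Integration.integrable_bound[where f="\<lambda>\<omega>. 2 * (?Y \<omega>)\<^sup>2 + 2 * (?m \<omega>)\<^sup>2"])
    show "integrable ?M (\<lambda>\<omega>. 2 * (?Y \<omega>)\<^sup>2 + 2 * (?m \<omega>)\<^sup>2)" using Y2 m2int by auto
    show "(\<lambda>\<omega>. (?Y \<omega> - ?m \<omega>)\<^sup>2) \<in> borel_measurable ?M" by measurable
    show "AE \<omega> in ?M. norm ((?Y \<omega> - ?m \<omega>)\<^sup>2) \<le> norm (2 * (?Y \<omega>)\<^sup>2 + 2 * (?m \<omega>)\<^sup>2)"
    proof (rule AE_I2)
      fix \<omega>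
      have key: "norm ((a - b)\<^sup>2) \<le> norm (2 * a\<^sup>2 + 2 * b\<^sup>2)" for a b :: real
      proof -
        have h: "2 * a\<^sup>2 + 2 * b\<^sup>2 - (a - b)\<^sup>2 = (a + b)\<^sup>2" by (simp add: power2_eq_square algebra_simps)
        have "0 \<le> (a + b)\<^sup>2" by simp
        then have "(a - b)\<^sup>2 \<le> 2 * a\<^sup>2 + 2 * b\<^sup>2" using h by linarith
        moreover have "0 \<le> 2 * a\<^sup>2 + 2 * b\<^sup>2" by simp
        ultimately show ?thesis by simp
      qed
      show "norm ((?Y \<omega> - ?m \<omega>)\<^sup>2) \<le> norm (2 * (?Y \<omega>)\<^sup>2 + 2 * (?m \<omega>)\<^sup>2)"
        by (rule key)
    qed
  qed
  have EmG: "AE \<omega> in ?M. real_cond_exp ?M ?G ?m \<omega> = ?m \<omega>" using sG.real_cond_exp_F_meas[OF mint mG] .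
  have E0: "AE \<omega> in ?M. real_cond_exp ?M ?G (\<lambda>\<omega>. ?Y \<omega> - ?m \<omega>) \<omega> = 0"
    using sG.real_cond_exp_diff[OF Yint mint] EYG EmG by eventually_elim simp
  have c1: "AE \<omega> in ?M. real_cond_exp ?M ?G (\<lambda>\<omega>. (?Y \<omega> - ?m \<omega>)\<^sup>2) \<omega>
      = real_cond_exp ?M ?G (\<lambda>\<omega>. (?Y \<omega> - real_cond_exp ?M ?G ?Y \<omega>)\<^sup>2) \<omega>"
    by (rule sG.real_cond_exp_cong) (use EYG in \<open>auto elim: AE_mp\<close>)
  have c3: "AE \<omega> in ?M. real_cond_exp ?M ?F (\<lambda>\<omega>. (?Y \<omega> - real_cond_exp ?M ?F ?Y \<omega>)\<^sup>2) \<omega>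
      = real_cond_exp ?M ?F (\<lambda>\<omega>. (?Y \<omega> - ?m \<omega>)\<^sup>2) \<omega>"
    by (rule sF.real_cond_exp_cong) (use EYF in \<open>auto elim: AE_mp\<close>)
  have E2G: "AE \<omega> in ?M. real_cond_exp ?M ?G (\<lambda>\<omega>. (?Y \<omega> - ?m \<omega>)\<^sup>2) \<omega> = ?s * (?v \<omega>)\<^sup>2"
    using c1 var_G[OF \<eta>K ij] c3 var_F[OF \<eta>K ij] by eventually_elim simp
  have svint: "integrable ?M (\<lambda>\<omega>. ?s * (?v \<omega>)\<^sup>2)"
    using integrable_cong_AE[OF borel_measurable_cond_exp2 _ var_F[OF \<eta>K ij]]
      sF.real_cond_exp_int(1)[OF Dint] by simp
  have svG[measurable]: "(\<lambda>\<omega>. ?s * (?v \<omega>)\<^sup>2) \<in> borel_measurable ?G" by measurable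
  have E3: "AE \<omega> in ?M. real_cond_exp ?M ?G (\<lambda>\<omega>. (?Y \<omega> - ?m \<omega>)\<^sup>2 - ?s * (?v \<omega>)\<^sup>2) \<omega> = 0"
    using sG.real_cond_exp_diff[OF Dint svint] E2G sG.real_cond_exp_F_meas[OF svint svG]
    by eventually_elim simp
  have vpos: "0 < ?v \<omega>" if "\<omega> \<in> space ?M" for \<omega> using V_pos[OF \<eta>K ij] that spM by simp
  have pw1: "g \<omega> * Zres S \<mu> V i j (fst \<eta>) \<omega> * Icen S C i j \<omega> + g \<omega> * Zres S \<mu> V i j (fst \<eta>) \<omega> * Iobs S C i j \<omega>
      = (g \<omega> * ?h \<omega> / ?v \<omega>) * (?Y \<omega> - ?m \<omega>)" if "\<omega> \<in> space ?M" for \<omega>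
  proof -
    have "g \<omega> * Zres S \<mu> V i j (fst \<eta>) \<omega> * Icen S C i j \<omega> + g \<omega> * Zres S \<mu> V i j (fst \<eta>) \<omega> * Iobs S C i j \<omega>
        = g \<omega> * Zres S \<mu> V i j (fst \<eta>) \<omega> * (Icen S C i j \<omega> + Iobs S C i j \<omega>)" by (simp add: algebra_simps)
    also have "\<dots> = g \<omega> * Zres S \<mu> V i j (fst \<eta>) \<omega> * ?h \<omega>" using sumI[OF that] by simp
    finally show ?thesis unfolding Zres_def by simp
  qed
  have pw2: "g \<omega> * ((Zres S \<mu> V i j (fst \<eta>) \<omega>)\<^sup>2 - ?s) * Icen S C i j \<omega> + g \<omega> * ((Zres S \<mu> V i j (fst \<eta>) \<omega>)\<^sup>2 - ?s) * Iobs S C i j \<omega>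
      = (g \<omega> * ?h \<omega> / (?v \<omega>)\<^sup>2) * ((?Y \<omega> - ?m \<omega>)\<^sup>2 - ?s * (?v \<omega>)\<^sup>2)" if "\<omega> \<in> space ?M" for \<omega>
  proof -
    have "g \<omega> * ((Zres S \<mu> V i j (fst \<eta>) \<omega>)\<^sup>2 - ?s) * Icen S C i j \<omega> + g \<omega> * ((Zres S \<mu> V i j (fst \<eta>) \<omega>)\<^sup>2 - ?s) * Iobs S C i j \<omega>
        = g \<omega> * ((Zres S \<mu> V i j (fst \<eta>) \<omega>)\<^sup>2 - ?s) * (Icen S C i j \<omega> + Iobs S C i j \<omega>)" by (simp add: algebra_simps)
    also have "\<dots> = g \<omega> * ((Zres S \<mu> V i j (fst \<eta>) \<omega>)\<^sup>2 - ?s) * ?h \<omega>" using sumI[OF that] by simp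
    finally show ?thesis using vpos[OF that] unfolding Zres_def by (simp add: field_simps power2_eq_square)
  qed
  have fG1: "(\<lambda>\<omega>. g \<omega> * ?h \<omega> / ?v \<omega>) \<in> borel_measurable ?G"
    by (rule borel_measurable_divide[OF borel_measurable_times[OF gG hG] vG])
  have fG2: "(\<lambda>\<omega>. g \<omega> * ?h \<omega> / (?v \<omega>)\<^sup>2) \<in> borel_measurable ?G"
    by (rule borel_measurable_divide[OF borel_measurable_times[OF gG hG] borel_measurable_power[OF vG]])
  have P1: "AE \<omega> in ?M.
            real_cond_exp ?M ?G (\<lambda>\<omega>. g \<omega> * Zres S \<mu> V i j (fst \<eta>) \<omega> * Icen S C i j \<omega>) \<omega>
          + real_cond_exp ?M ?G (\<lambda>\<omega>. g \<omega> * Zres S \<mu> V i j (fst \<eta>) \<omega> * Iobs S C i j \<omega>) \<omega> = 0"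
  proof -
    have i12: "integrable ?M (\<lambda>\<omega>. g \<omega> * Zres S \<mu> V i j (fst \<eta>) \<omega> * Icen S C i j \<omega> + g \<omega> * Zres S \<mu> V i j (fst \<eta>) \<omega> * Iobs S C i j \<omega>)"
      using int1 int2 by auto
    have ip: "integrable ?M (\<lambda>\<omega>. (g \<omega> * ?h \<omega> / ?v \<omega>) * (?Y \<omega> - ?m \<omega>))"
    proof -
      have "integrable ?M (\<lambda>\<omega>. (g \<omega> * ?h \<omega> / ?v \<omega>) * (?Y \<omega> - ?m \<omega>)) = integrable ?M (\<lambda>\<omega>. g \<omega> * Zres S \<mu> V i j (fst \<eta>) \<omega> * Icen S C i j \<omega> + g \<omega> * Zres S \<mu> V i j (fst \<eta>) \<omega> * Iobs S C i j \<omega>)"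
        by (rule Bochner_Integration.integrable_cong[OF refl]) (simp add: pw1)
      then show ?thesis using i12 by simp
    qed
    have a: "AE \<omega> in ?M. real_cond_exp ?M ?G (\<lambda>\<omega>. g \<omega> * Zres S \<mu> V i j (fst \<eta>) \<omega> * Icen S C i j \<omega> + g \<omega> * Zres S \<mu> V i j (fst \<eta>) \<omega> * Iobs S C i j \<omega>) \<omega>
        = real_cond_exp ?M ?G (\<lambda>\<omega>. (g \<omega> * ?h \<omega> / ?v \<omega>) * (?Y \<omega> - ?m \<omega>)) \<omega>"
      by (rule sG.real_cond_exp_cong) (use pw1 i12 ip in \<open>auto intro: AE_I2\<close>)
    have b: "AE \<omega> in ?M. real_cond_exp ?M ?G (\<lambda>\<omega>. (g \<omega> * ?h \<omega> / ?v \<omega>) * (?Y \<omega> - ?m \<omega>)) \<omega>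
        = (g \<omega> * ?h \<omega> / ?v \<omega>) * real_cond_exp ?M ?G (\<lambda>\<omega>. ?Y \<omega> - ?m \<omega>) \<omega>"
      by (rule sG.real_cond_exp_mult[OF fG1 _ ip]) measurable
    show ?thesis using sG.real_cond_exp_add[OF int1 int2] a b E0 by eventually_elim simp
  qed
  have P2: "AE \<omega> in ?M.
            real_cond_exp ?M ?G (\<lambda>\<omega>. g \<omega> * ((Zres S \<mu> V i j (fst \<eta>) \<omega>)\<^sup>2 - ?s) * Icen S C i j \<omega>) \<omega>
          + real_cond_exp ?M ?G (\<lambda>\<omega>. g \<omega> * ((Zres S \<mu> V i j (fst \<eta>) \<omega>)\<^sup>2 - ?s) * Iobs S C i j \<omega>) \<omega> = 0"
  proof -
    have i12: "integrable ?M (\<lambda>\<omega>. g \<omega> * ((Zres S \<mu> V i j (fst \<eta>) \<omega>)\<^sup>2 - ?s) * Icen S C i j \<omega> + g \<omega> * ((Zres S \<mu> V i j (fst \<eta>) \<omega>)\<^sup>2 - ?s) * Iobs S C i j \<omega>)"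
      using int3 int4 by auto
    have ip: "integrable ?M (\<lambda>\<omega>. (g \<omega> * ?h \<omega> / (?v \<omega>)\<^sup>2) * ((?Y \<omega> - ?m \<omega>)\<^sup>2 - ?s * (?v \<omega>)\<^sup>2))"
    proof -
      have "integrable ?M (\<lambda>\<omega>. (g \<omega> * ?h \<omega> / (?v \<omega>)\<^sup>2) * ((?Y \<omega> - ?m \<omega>)\<^sup>2 - ?s * (?v \<omega>)\<^sup>2)) = integrable ?M (\<lambda>\<omega>. g \<omega> * ((Zres S \<mu> V i j (fst \<eta>) \<omega>)\<^sup>2 - ?s) * Icen S C i j \<omega> + g \<omega> * ((Zres S \<mu> V i j (fst \<eta>) \<omega>)\<^sup>2 - ?s) * Iobs S C i j \<omega>)"
        by (rule Bochner_Integration.integrable_cong[OF refl]) (simp add: pw2)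
      then show ?thesis using i12 by simp
    qed
    have a: "AE \<omega> in ?M. real_cond_exp ?M ?G (\<lambda>\<omega>. g \<omega> * ((Zres S \<mu> V i j (fst \<eta>) \<omega>)\<^sup>2 - ?s) * Icen S C i j \<omega> + g \<omega> * ((Zres S \<mu> V i j (fst \<eta>) \<omega>)\<^sup>2 - ?s) * Iobs S C i j \<omega>) \<omega>
        = real_cond_exp ?M ?G (\<lambda>\<omega>. (g \<omega> * ?h \<omega> / (?v \<omega>)\<^sup>2) * ((?Y \<omega> - ?m \<omega>)\<^sup>2 - ?s * (?v \<omega>)\<^sup>2)) \<omega>"
      by (rule sG.real_cond_exp_cong) (use pw2 i12 ip in \<open>auto intro: AE_I2\<close>)
    have b: "AE \<omega> in ?M. real_cond_exp ?M ?G (\<lambda>\<omega>. (g \<omega> * ?h \<omega> / (?v \<omega>)\<^sup>2) * ((?Y \<omega> - ?m \<omega>)\<^sup>2 - ?s * (?v \<omega>)\<^sup>2)) \<omega>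
        = (g \<omega> * ?h \<omega> / (?v \<omega>)\<^sup>2) * real_cond_exp ?M ?G (\<lambda>\<omega>. (?Y \<omega> - ?m \<omega>)\<^sup>2 - ?s * (?v \<omega>)\<^sup>2) \<omega>"
      by (rule sG.real_cond_exp_mult[OF fG2 _ ip]) measurable
    show ?thesis using sG.real_cond_exp_add[OF int3 int4] a b E3 by eventually_elim simp
  qed
  show ?thesis
  proof
    show "AE \<omega> in ?M.
            real_cond_exp ?M ?G (\<lambda>\<omega>. g \<omega> * Zres S \<mu> V i j (fst \<eta>) \<omega> * Icen S C i j \<omega>) \<omega>
          = - real_cond_exp ?M ?G (\<lambda>\<omega>. g \<omega> * Zres S \<mu> V i j (fst \<eta>) \<omega> * Iobs S C i j \<omega>) \<omega>"
      using P1 by eventually_elim linarith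
    show "AE \<omega> in ?M.
            real_cond_exp ?M ?G (\<lambda>\<omega>. g \<omega> * ((Zres S \<mu> V i j (fst \<eta>) \<omega>)\<^sup>2 - ?s) * Icen S C i j \<omega>) \<omega>
          = - real_cond_exp ?M ?G (\<lambda>\<omega>. g \<omega> * ((Zres S \<mu> V i j (fst \<eta>) \<omega>)\<^sup>2 - ?s) * Iobs S C i j \<omega>) \<omega>"
      using P2 by eventually_elim linarith
  qed
qed

end
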